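(* Consider the State Machine Replication protocol (described in the context) executed with fewer than $\lfloor n/3 \rfloor$ Byzantine processes and fewer than $\lceil n/6 \rceil - 1$ transient faults. Then for every pulse $Pulse_i$ with $i>1$, just before $Pulse_i$ every non-faulty process is in the state $\delta(s, \mathit{in}_{i-1})$, where $s$ is the state of a non-faulty process just before $Pulse_{i-1}$ and $\mathit{in}_{i-1}$ is the input value commonly decided in the iteration triggered by $Pulse_{i-1}$.
   Context: System model: $n$ processes in a synchronous, fully connected message-passing system with authenticated channels; Byzantine processes may deviate arbitrarily (including sending different messages to different processes). $M$ is a deterministic state machine with state set $Q$, input alphabet $\Sigma$ and transition function $\delta: Q\times\Sigma\to Q$ (states and inputs are encoded as elements of a totally ordered set, e.g. integers). Each process keeps a local variable input\_value (its current external input) and current\_state (its replica of the state of $M$). Execution is divided into iterations, each triggered by an external global pulse $Pulse$ and consisting of several synchronous rounds. In each iteration every process: (1) sets input\_value to the output of the Median-based Byzantine Agreement algorithm run with input input\_value; (2) sets current\_state to the output of the Median-based Byzantine Agreement algorithm run with input current\_state; (3) sets its replica state (the current\_state used in the next iteration) to $\delta(\text{current\_state}, \text{input\_value})$. Recurrent transient faults occur only at the beginning of a pulse: they arbitrarily corrupt the local state (state value or input) of a non-Byzantine process, which then follows the protocol. A process is non-faulty if it is not Byzantine and not currently corrupted by a transient fault. Median-based Byzantine Agreement algorithm with parameter $0 \le \alpha < \lceil n/6\rceil - 1$, run by a process with value $v$: (a) send $v$ to all processes; set $A[i]$ to the value received from $p_i$ ($\bot$ if none). (b) For each $i$, in parallel,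 run a WeakMVBA instance with input $A[i]$ and replace $A[i]$ by its decision, where WeakMVBA is a Byzantine agreement protocol such that all non-faulty processes decide the same value, and if all non-faulty processes have the same input $u$ they decide $u$ (otherwise the decision may be any value or the default $\bot$). (c) Remove $\bot$ entries to get a list of length $k$; let $m$ be a most frequent value (deterministic tie-breaking) with count $C[m]$; if $C[m]\ge \lfloor k/3\rfloor+1+\alpha$ output $m$, else output the median of the sorted list (the entry at position $\lfloor k/2\rfloor$; lower middle value for even $k$). *)

theory Defs
  imports Complex_Main
begin

definition defined_vals :: "(nat \<Rightarrow> 'v option) \<Rightarrow> nat \<Rightarrow> 'v list" where
  "defined_vals A n = map the (filter (\<lambda>x. x \<noteq> None) (map A [0..<n]))"

definition most_frequent :: "'v::linorder list \<Rightarrow> 'v" where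
  "most_frequent xs =
     (let c = Max (set (map (count_list xs) xs))
      in Min {x \<in> set xs. count_list xs x = c})"

definition mbba_out :: "nat \<Rightarrow> 'v::linorder list \<Rightarrow> 'v" where
  "mbba_out \<alpha> xs =
     (let k = length xs; m = most_frequent xs
      in if count_list xs m \<ge> k div 3 + 1 + \<alpha> then m else sort xs ! (k div 2))"

text \<open>Processes are 0..n-1. Pulses / iterations are indexed by i >= 1.
  Byz: the Byzantine processes. Tr i: the (non-Byzantine) processes hit by a transient
  fault at the beginning of Pulse_i.
  st i p   : replica state (current_state) of p just before Pulse_i;
  stc i p  : current_state of p at the start of iteration i (after possible corruption);
  inp i p  : input_value of p at the start of iteration i (external input, possibly corrupted);
  rS i p j / rI i p j : value p received from p_j in step (a) of the state / input BA run;
  dS i p j / dI i p j : decision of p in the WeakMVBA instance j of the state / input BA run.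
  Processes hit by a transient fault follow the protocol from the pulse on, so all
  non-Byzantine processes are correct participants of the WeakMVBA instances.\<close>
definition smr_execution ::
  "nat \<Rightarrow> nat \<Rightarrow> ('q::linorder \<Rightarrow> 'a::linorder \<Rightarrow> 'q) \<Rightarrow> 'q \<Rightarrow> nat set \<Rightarrow> (nat \<Rightarrow> nat set)
   \<Rightarrow> (nat \<Rightarrow> nat \<Rightarrow> 'q) \<Rightarrow> (nat \<Rightarrow> nat \<Rightarrow> 'q) \<Rightarrow> (nat \<Rightarrow> nat \<Rightarrow> 'a)
   \<Rightarrow> (nat \<Rightarrow> nat \<Rightarrow> nat \<Rightarrow> 'q option) \<Rightarrow> (nat \<Rightarrow> nat \<Rightarrow> nat \<Rightarrow> 'a option)
   \<Rightarrow> (nat \<Rightarrow> nat \<Rightarrow> nat \<Rightarrow> 'q option) \<Rightarrow> (nat \<Rightarrow> nat \<Rightarrow> nat \<Rightarrow> 'a option) \<Rightarrow> bool" where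
  "smr_execution n \<alpha> \<delta> q0 Byz Tr st stc inp rS rI dS dI \<longleftrightarrow>
     \<comment> \<open>all replicas start in the initial state of M\<close>
     (\<forall>p<n. p \<notin> Byz \<longrightarrow> st 1 p = q0) \<and>
     (\<forall>i\<ge>1.
        \<comment> \<open>transient faults only corrupt processes in Tr i\<close>
        (\<forall>p<n. p \<notin> Byz \<longrightarrow> p \<notin> Tr i \<longrightarrow> stc i p = st i p) \<and>
        \<comment> \<open>step (a): reliable authenticated synchronous channels from non-Byzantine senders\<close>
        (\<forall>p<n. \<forall>j<n. p \<notin> Byz \<longrightarrow> j \<notin> Byz \<longrightarrow>
            rS i p j = Some (stc i j) \<and> rI i p j = Some (inp i j)) \<and>
        \<comment> \<open>step (b): WeakMVBA agreement and validity for every instance j\<close>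
        (\<forall>j<n.
           (\<forall>p<n. \<forall>p'<n. p \<notin> Byz \<longrightarrow> p' \<notin> Byz \<longrightarrow> dS i p j = dS i p' j \<and> dI i p j = dI i p' j) \<and>
           (\<forall>u. (\<forall>p<n. p \<notin> Byz \<longrightarrow> rS i p j = u) \<longrightarrow> (\<forall>p<n. p \<notin> Byz \<longrightarrow> dS i p j = u)) \<and>
           (\<forall>u. (\<forall>p<n. p \<notin> Byz \<longrightarrow> rI i p j = u) \<longrightarrow> (\<forall>p<n. p \<notin> Byz \<longrightarrow> dI i p j = u))) \<and>
        \<comment> \<open>steps (1)-(3): new replica state\<close>
        (\<forall>p<n. p \<notin> Byz \<longrightarrow>
            st (Suc i) p = \<delta> (mbba_out \<alpha> (defined_vals (dS i p) n))
                                (mbba_out \<alpha> (defined_vals (dI i p) n))))"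

end

theory Submission
  imports Defs
begin

lemma count_sort: "count_list (sort xs) x = count_list xs x"
  by (simp add: count_list_eq_length_filter filter_sort)

lemma count_idx: "count_list xs x = card {i. i < length xs \<and> xs ! i = x}"
  by (simp add: count_list_eq_length_filter length_filter_conv_card eq_commute)

lemma median_major:
  fixes xs :: "'v::linorder list"
  assumes "2 * count_list xs s > length xs"
  shows "sort xs ! (length xs div 2) = s"
proof (rule ccontr)
  let ?ys = "sort xs" let ?k = "length xs" let ?m = "?k div 2"
  assume ne: "?ys ! ?m \<noteq> s"
  have srt: "sorted ?ys" by simp
  have len: "length ?ys = ?k" by simp
  have c: "count_list ?ys s = card {i. i < ?k \<and> ?ys ! i = s}"
    using count_idx[of ?ys s] by simp
  have mk: "?m < ?k" using assms count_le_length[of xs s] by linarith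
  show False
  proof (cases "?ys ! ?m < s")
    case True
    have "{i. i < ?k \<and> ?ys ! i = s} \<subseteq> {?m<..<?k}"
    proof
      fix i assume i: "i \<in> {i. i < ?k \<and> ?ys ! i = s}"
      have "\<not> i \<le> ?m"
      proof
        assume "i \<le> ?m"
        then have "?ys ! i \<le> ?ys ! ?m" using srt mk len by (simp add: sorted_nth_mono)
        then show False using i True by auto
      qed
      then show "i \<in> {?m<..<?k}" using i by auto
    qed
    then have "card {i. i < ?k \<and> ?ys ! i = s} \<le> card {?m<..<?k}" by (intro card_mono) auto
    then have "count_list xs s \<le> ?k - Suc ?m" using c count_sort[of xs s] by simp
    then show False using assms by linarith
  next
    case False
    then have gt: "?ys ! ?m > s" using ne by auto
    have "{i. i < ?k \<and> ?ys ! i = s} \<subseteq> {..<?m}"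
    proof
      fix i assume i: "i \<in> {i. i < ?k \<and> ?ys ! i = s}"
      have "\<not> ?m \<le> i"
      proof
        assume "?m \<le> i"
        then have "?ys ! ?m \<le> ?ys ! i" using srt i len sorted_nth_mono[of ?ys ?m i] by simp
        then show False using i gt by auto
      qed
      then show "i \<in> {..<?m}" by auto
    qed
    then have "card {i. i < ?k \<and> ?ys ! i = s} \<le> card {..<?m}" by (intro card_mono) auto
    then have "count_list xs s \<le> ?m" using c count_sort[of xs s] by simp
    then show False using assms by linarith
  qed
qed

lemma mf_major:
  fixes xs :: "'v::linorder list"
  assumes "2 * count_list xs s > length xs"
  shows "most_frequent xs = s"
proof -
  have sin: "s \<in> set xs" using assms count_notin by fastforce
  have other: "count_list xs x < count_list xs s" if "x \<noteq> s" for x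
  proof -
    have "count_list xs x + count_list xs s \<le> length xs"
      using that by (induction xs) auto
    then show ?thesis using assms by linarith
  qed
  have mx: "Max (set (map (count_list xs) xs)) = count_list xs s"
  proof (rule Max_eqI)
    show "finite (set (map (count_list xs) xs))" by simp
    show "count_list xs s \<in> set (map (count_list xs) xs)" using sin by simp
    fix y assume "y \<in> set (map (count_list xs) xs)"
    then obtain x where "y = count_list xs x" by auto
    then show "y \<le> count_list xs s" using other by (cases "x = s") force+
  qed
  have "{x \<in> set xs. count_list xs x = count_list xs s} = {s}"
    using sin other by force
  then show ?thesis unfolding most_frequent_def Let_def mx by simp
qed

lemma mbba_major:
  fixes xs :: "'v::linorder list"
  assumes "2 * count_list xs s > length xs"
  shows "mbba_out \<alpha> xs = s"
  using mf_major[OF assms] median_major[OF assms] unfolding mbba_out_def Let_def by simp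

lemma dv_Suc: "defined_vals A (Suc n) = defined_vals A n @ (case A n of None \<Rightarrow> [] | Some v \<Rightarrow> [v])"
  by (cases "A n") (auto simp: defined_vals_def)

lemma dv_len: "length (defined_vals A n) \<le> n"
  by (induction n) (auto simp: dv_Suc defined_vals_def split: option.splits)

lemma dv_count: "count_list (defined_vals A n) s = card {i. i < n \<and> A i = Some s}"
proof (induction n)
  case 0 then show ?case by (simp add: defined_vals_def)
next
  case (Suc n)
  have "{i. i < Suc n \<and> A i = Some s} = {i. i < n \<and> A i = Some s} \<union> (if A n = Some s then {n} else {})"
    by (auto simp: less_Suc_eq)
  then show ?case using Suc by (auto simp: dv_Suc split: option.splits)
qed

lemma dv_cong: "(\<And>i. i < n \<Longrightarrow> A i = B i) \<Longrightarrow> defined_vals A n = defined_vals B n"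
proof -
  assume h: "\<And>i. i < n \<Longrightarrow> A i = B i"
  have eq: "map A [0..<n] = map B [0..<n]" by (rule map_cong) (auto simp: h)
  show ?thesis unfolding defined_vals_def eq ..
qed

theorem lemma5:
  fixes \<delta> :: "'q::linorder \<Rightarrow> 'a::linorder \<Rightarrow> 'q"
    and n \<alpha> :: nat and Byz :: "nat set" and Tr :: "nat \<Rightarrow> nat set"
  assumes byz_sub: "Byz \<subseteq> {..<n}"
    and byz_card: "card Byz < n div 3"
    and tr_sub: "\<forall>i\<ge>1. Tr i \<subseteq> {..<n} - Byz"
    and tr_card: "\<forall>i\<ge>1. int (card (Tr i)) < \<lceil>real n / 6\<rceil> - 1"
    and alpha: "int \<alpha> < \<lceil>real n / 6\<rceil> - 1"
    and exec: "smr_execution n \<alpha> \<delta> q0 Byz Tr st stc inp rS rI dS dI"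
  shows "\<forall>i>1. \<forall>p<n. \<forall>q<n. \<forall>r<n. p \<notin> Byz \<longrightarrow> q \<notin> Byz \<longrightarrow> r \<notin> Byz \<longrightarrow>
           st i p = \<delta> (st (i - 1) q) (mbba_out \<alpha> (defined_vals (dI (i - 1) r) n))"
proof (intro allI impI)
  fix i p q r :: nat
  assume i1: "1 < i" and pn: "p < n" and qn: "q < n" and rn: "r < n"
    and pB: "p \<notin> Byz" and qB: "q \<notin> Byz" and rB: "r \<notin> Byz"
  define j where "j = i - 1"
  have j1: "j \<ge> 1" and ij: "i = Suc j" using i1 by (auto simp: j_def)
  note E0 = conjunct2[OF exec[unfolded smr_execution_def]]
  have init: "\<forall>p<n. p \<notin> Byz \<longrightarrow> st 1 p = q0" by (rule conjunct1[OF exec[unfolded smr_execution_def]])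
  have E: "\<And>k. k \<ge> 1 \<Longrightarrow>
        (\<forall>p<n. p \<notin> Byz \<longrightarrow> p \<notin> Tr k \<longrightarrow> stc k p = st k p) \<and>
        (\<forall>p<n. \<forall>j<n. p \<notin> Byz \<longrightarrow> j \<notin> Byz \<longrightarrow>
            rS k p j = Some (stc k j) \<and> rI k p j = Some (inp k j)) \<and>
        (\<forall>j<n.
           (\<forall>p<n. \<forall>p'<n. p \<notin> Byz \<longrightarrow> p' \<notin> Byz \<longrightarrow> dS k p j = dS k p' j \<and> dI k p j = dI k p' j) \<and>
           (\<forall>u. (\<forall>p<n. p \<notin> Byz \<longrightarrow> rS k p j = u) \<longrightarrow> (\<forall>p<n. p \<notin> Byz \<longrightarrow> dS k p j = u)) \<and>
           (\<forall>u. (\<forall>p<n. p \<notin> Byz \<longrightarrow> rI k p j = u) \<longrightarrow> (\<forall>p<n. p \<notin> Byz \<longrightarrow> dI k p j = u))) \<and>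
        (\<forall>p<n. p \<notin> Byz \<longrightarrow>
            st (Suc k) p = \<delta> (mbba_out \<alpha> (defined_vals (dS k p) n))
                                (mbba_out \<alpha> (defined_vals (dI k p) n)))"
    by (rule mp[OF spec[OF E0]])
  have E1: "stc k p = st k p" if "k \<ge> 1" "p < n" "p \<notin> Byz" "p \<notin> Tr k" for k p
    using conjunct1[OF E[OF that(1)]] that(2-4) by blast
  have E2: "rS k p j = Some (stc k j)" if "k \<ge> 1" "p < n" "j < n" "p \<notin> Byz" "j \<notin> Byz" for k p j
    using conjunct1[OF conjunct2[OF E[OF that(1)]]] that(2-5) by blast
  have E3: "dS k p j = dS k p' j \<and> dI k p j = dI k p' j"
    if "k \<ge> 1" "j < n" "p < n" "p' < n" "p \<notin> Byz" "p' \<notin> Byz" for k p p' j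
  proof -
    have "\<forall>p<n. \<forall>p'<n. p \<notin> Byz \<longrightarrow> p' \<notin> Byz \<longrightarrow> dS k p j = dS k p' j \<and> dI k p j = dI k p' j"
      using conjunct1[OF conjunct2[OF conjunct2[OF E[OF that(1)]]]] that(2) by blast
    then show ?thesis using that(3-6) by blast
  qed
  have E4: "\<forall>p<n. p \<notin> Byz \<longrightarrow> dS k p j = u"
    if "k \<ge> 1" "j < n" "\<forall>p<n. p \<notin> Byz \<longrightarrow> rS k p j = u" for k j u
  proof -
    have "\<forall>u. (\<forall>p<n. p \<notin> Byz \<longrightarrow> rS k p j = u) \<longrightarrow> (\<forall>p<n. p \<notin> Byz \<longrightarrow> dS k p j = u)"
      using conjunct1[OF conjunct2[OF conjunct2[OF E[OF that(1)]]]] that(2) by blast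
    then show ?thesis using that(3) by blast
  qed
  have E5: "st (Suc k) p = \<delta> (mbba_out \<alpha> (defined_vals (dS k p) n))
                                (mbba_out \<alpha> (defined_vals (dI k p) n))"
    if "k \<ge> 1" "p < n" "p \<notin> Byz" for k p
    using conjunct2[OF conjunct2[OF conjunct2[OF E[OF that(1)]]]] that(2-3) by blast
  have same: "st k a = st k b" if "k \<ge> 1" "a < n" "b < n" "a \<notin> Byz" "b \<notin> Byz" for k a b
  proof (cases "k = 1")
    case True then show ?thesis using init that by simp
  next
    case False
    then obtain k' where k': "k = Suc k'" "k' \<ge> 1" using \<open>k \<ge> 1\<close> False by (cases k) auto
    have eS: "defined_vals (dS k' a) n = defined_vals (dS k' b) n"
      by (rule dv_cong) (use E3[OF k'(2) _ that(2-5)] in blast)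
    have eI: "defined_vals (dI k' a) n = defined_vals (dI k' b) n"
      by (rule dv_cong) (use E3[OF k'(2) _ that(2-5)] in blast)
    show ?thesis using E5[OF k'(2) that(2,4)] E5[OF k'(2) that(3,5)] eS eI k'(1) by simp
  qed
  define s where "s = st j q"
  define G where "G = {..<n} - Byz - Tr j"
  have Gs: "dS j p g = Some s" if "g \<in> G" for g
  proof -
    have g: "g < n" "g \<notin> Byz" "g \<notin> Tr j" using that by (auto simp: G_def)
    have "stc j g = s" using E1[OF j1 g(1,2,3)] same[OF j1 g(1) qn g(2) qB] by (simp add: s_def)
    then have "\<forall>p'<n. p' \<notin> Byz \<longrightarrow> rS j p' g = Some s" using E2[OF j1 _ g(1) _ g(2)] \<open>stc j g = s\<close> by simp
    then show ?thesis using E4[OF j1 g(1)] pn pB by blast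
  qed
  have cG: "card G \<le> count_list (defined_vals (dS j p) n) s"
    unfolding dv_count using Gs by (intro card_mono) (auto simp: G_def)
  have fin: "finite Byz" using byz_sub finite_subset by blast
  have finT: "finite (Tr j)"
  proof -
    have "Tr j \<subseteq> {..<n} - Byz" using tr_sub j1 by blast
    then show ?thesis by (rule finite_subset) simp
  qed
  have "card G \<ge> n - card Byz - card (Tr j)"
  proof -
    have "card ({..<n} - Byz) = n - card Byz" using byz_sub fin by (simp add: card_Diff_subset)
    moreover have "card ({..<n} - Byz) - card (Tr j) \<le> card G"
      unfolding G_def using diff_card_le_card_Diff[OF finT, of "{..<n} - Byz"] by simp
    ultimately show ?thesis by simp
  qed
  moreover have "6 * card (Tr j) < n"
  proof -
    have "int (card (Tr j)) < \<lceil>real n / 6\<rceil> - 1" using tr_card j1 by blast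
    moreover have "real_of_int \<lceil>real n / 6\<rceil> < real n / 6 + 1" by linarith
    ultimately have "real (card (Tr j)) < real n / 6" by linarith
    then show ?thesis by linarith
  qed
  moreover have "3 * card Byz < n" using byz_card by linarith
  ultimately have maj: "2 * count_list (defined_vals (dS j p) n) s > length (defined_vals (dS j p) n)"
    using cG dv_len[of "dS j p" n] by linarith
  have eI: "defined_vals (dI j p) n = defined_vals (dI j r) n"
    by (rule dv_cong) (use E3[OF j1 _ pn rn pB rB] in blast)
  show "st i p = \<delta> (st (i - 1) q) (mbba_out \<alpha> (defined_vals (dI (i - 1) r) n))"
    using E5[OF j1 pn pB] mbba_major[OF maj] eI unfolding ij s_def by simp
qed

end
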